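(* Let $\mathbf D$ be a regular $2^r$-run design given by distinct $b_1,\dots,b_n\in\Delta_r$ with $\operatorname{rank}(b_1,\dots,b_n)=r$, $n\ge 4$. Then there are constants $c_1,c_2,c_3$ depending only on $n$ and $r$ (not on the particular design) such that: (a) $A^{(1)}_3=c_1-A_3(\widetilde T)$; (b) $A^{(1)}_4=c_2+A_3(\widetilde T)+A_4(\widetilde T)$; (c) if moreover $b_1,b_2,b_3,b_4$ are linearly independent and $b_1+b_2\notin\{b_5,\dots,b_n\}$, $b_3+b_4\notin\{b_5,\dots,b_n\}$, then $A^{(2)}_2=c_3+A^{(12)}_2(T_{12})+A^{(34)}_2(T_{34})$.
   Context: $\Delta_r$ is the set of nonzero vectors of $\mathrm{GF}(2)^r$ (all arithmetic mod 2). "Number of $m$-subsets of a list with sum in $S$" counts $m$-element subsets of the listed (distinct) vectors whose sum lies in $S$. $A^{(1)}_m$: number of $m$-subsets of $\{b_2,b_4,b_5,\dots,b_n\}$ with sum $0$. $A^{(21)}_m$: $m$-subsets of $\{b_4,\dots,b_n\}$ with sum in $\{b_1,b_1+b_2\}$; $A^{(22)}_m$: $m$-subsets of $\{b_2,b_5,\dots,b_n\}$ with sum in $\{b_3,b_3+b_4\}$; $A^{(2)}_m=A^{(21)}_m+A^{(22)}_m$. $\widetilde T=\Delta_r\setminus\{b_2,b_4,b_5,\dots,b_n\}$; $A_m(\widetilde T)$: number of $m$-subsets of $\widetilde T$ with sum $0$. $T_{12}=\widetilde T\setminus\{b_1,b_1+b_2\}$, $T_{34}=\widetilde T\setminus\{b_3,b_3+b_4\}$;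 $A^{(12)}_2(T_{12})$: number of 2-subsets of $T_{12}$ with sum in $\{b_1,b_1+b_2\}$; $A^{(34)}_2(T_{34})$: number of 2-subsets of $T_{34}$ with sum in $\{b_3,b_3+b_4\}$. *)

theory Defs
  imports "HOL-Analysis.Analysis" "HOL-Library.Z2"
begin

text \<open>Vectors of GF(2)^r are modelled as \<open>bit ^ 'r\<close> with r = CARD('r).\<close>

definition Delta :: "(bit ^ 'r) set" where
  "Delta = UNIV - {0}"

definition nsub :: "nat \<Rightarrow> (bit ^ 'r) set \<Rightarrow> (bit ^ 'r) set \<Rightarrow> nat" where
  "nsub m X S = card {Y. Y \<subseteq> X \<and> card Y = m \<and> sum id Y \<in> S}"

definition design :: "nat \<Rightarrow> (nat \<Rightarrow> bit ^ 'r) \<Rightarrow> bool" where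
  "design n b \<longleftrightarrow> inj_on b {1..n} \<and> (\<forall>i\<in>{1..n}. b i \<in> Delta)
     \<and> vec.dim (b ` {1..n}) = CARD('r)"

definition Ttil :: "nat \<Rightarrow> (nat \<Rightarrow> bit ^ 'r) \<Rightarrow> (bit ^ 'r) set" where
  "Ttil n b = Delta - b ` ({2} \<union> {4..n})"

definition A1 :: "nat \<Rightarrow> (nat \<Rightarrow> bit ^ 'r) \<Rightarrow> nat \<Rightarrow> nat" where
  "A1 n b m = nsub m (b ` ({2} \<union> {4..n})) {0}"

definition A21 :: "nat \<Rightarrow> (nat \<Rightarrow> bit ^ 'r) \<Rightarrow> nat \<Rightarrow> nat" where
  "A21 n b m = nsub m (b ` {4..n}) {b 1, b 1 + b 2}"

definition A22 :: "nat \<Rightarrow> (nat \<Rightarrow> bit ^ 'r) \<Rightarrow> nat \<Rightarrow> nat" where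
  "A22 n b m = nsub m (b ` ({2} \<union> {5..n})) {b 3, b 3 + b 4}"

definition A2 :: "nat \<Rightarrow> (nat \<Rightarrow> bit ^ 'r) \<Rightarrow> nat \<Rightarrow> nat" where
  "A2 n b m = A21 n b m + A22 n b m"

definition AT :: "nat \<Rightarrow> (bit ^ 'r) set \<Rightarrow> nat" where
  "AT m T = nsub m T {0}"

definition T12 :: "nat \<Rightarrow> (nat \<Rightarrow> bit ^ 'r) \<Rightarrow> (bit ^ 'r) set" where
  "T12 n b = Ttil n b - {b 1, b 1 + b 2}"

definition T34 :: "nat \<Rightarrow> (nat \<Rightarrow> bit ^ 'r) \<Rightarrow> (bit ^ 'r) set" where
  "T34 n b = Ttil n b - {b 3, b 3 + b 4}"

end

theory Submission
  imports Defs "HOL-Combinatorics.Multiset_Permutations"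
begin


instance bit :: finite
proof
  have "(UNIV::bit set) = {0, 1}" by auto
  then show "finite (UNIV::bit set)" by (metis finite.emptyI finite.insertI)
qed

lemma bv_add_self [simp]: "(x::bit^'r) + x = 0"
  by (simp add: vec_eq_iff)

lemma bv_add_cancel [simp]: "(x::bit^'r) + y + y = x" "(x::bit^'r) + (x + y) = y"
  by (simp_all add: vec_eq_iff)
lemma bv_add_eq0: "(x::bit^'r) + y = 0 \<longleftrightarrow> x = y"
proof
  assume "x + y = 0" then have "x + y + y = y" by simp
  then show "x = y" by simp
qed simp

lemma sum_list_distinct_id: "distinct xs \<Longrightarrow> sum_list xs = \<Sum>(set xs)"
  using sum_list_distinct_conv_sum_set[of xs id] by simp

lemma link:
  assumes "finite X"
  shows "card {xs. distinct xs \<and> set xs \<subseteq> X \<and> length xs = m \<and> sum_list xs \<in> S} = fact m * nsub m X S"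
proof -
  let ?Y = "{Y. Y \<subseteq> X \<and> card Y = m \<and> sum id Y \<in> S}"
  have eq: "{xs. distinct xs \<and> set xs \<subseteq> X \<and> length xs = m \<and> sum_list xs \<in> S} = (\<Union>Y\<in>?Y. permutations_of_set Y)"
  proof (intro equalityI subsetI)
    fix xs assume "xs \<in> {xs. distinct xs \<and> set xs \<subseteq> X \<and> length xs = m \<and> sum_list xs \<in> S}"
    then have h: "distinct xs" "set xs \<subseteq> X" "length xs = m" "sum_list xs \<in> S" by auto
    have "set xs \<in> ?Y" using h by (simp add: distinct_card sum_list_distinct_id)
    moreover have "xs \<in> permutations_of_set (set xs)" using h by (simp add: permutations_of_set_def)
    ultimately show "xs \<in> (\<Union>Y\<in>?Y. permutations_of_set Y)" by blast
  next
    fix xs assume "xs \<in> (\<Union>Y\<in>?Y. permutations_of_set Y)"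
    then obtain Y where Y: "Y \<in> ?Y" "xs \<in> permutations_of_set Y" by blast
    then have "set xs = Y" "distinct xs" by (simp_all add: permutations_of_set_def)
    with Y(1) show "xs \<in> {xs. distinct xs \<and> set xs \<subseteq> X \<and> length xs = m \<and> sum_list xs \<in> S}"
      using distinct_card[of xs] by (simp add: sum_list_distinct_id)
  qed
  have "?Y \<subseteq> Pow X" by blast
  then have fin: "finite ?Y" using assms by (meson finite_Pow_iff finite_subset)
  have "card (\<Union>Y\<in>?Y. permutations_of_set Y) = (\<Sum>Y\<in>?Y. card (permutations_of_set Y))"
    proof (rule card_UN_disjoint[OF fin])
    show "\<forall>i\<in>?Y. finite (permutations_of_set i)" by simp
    show "\<forall>i\<in>?Y. \<forall>j\<in>?Y. i \<noteq> j \<longrightarrow> permutations_of_set i \<inter> permutations_of_set j = {}"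
      unfolding permutations_of_set_def by blast
  qed
  also have "\<dots> = (\<Sum>Y\<in>?Y. fact m)"
    proof (rule sum.cong)
    fix Y assume "Y \<in> ?Y"
    then have "finite Y" "card Y = m" using finite_subset[OF _ assms] by auto
    then show "card (permutations_of_set Y) = fact m" by simp
  qed simp
  finally show ?thesis unfolding eq nsub_def by simp
qed

lemma len2: "length xs = 2 \<Longrightarrow> \<exists>a b. xs = [a,b]"
  by (auto simp: length_Suc_conv numeral_eq_Suc)
lemma len3: "length xs = 3 \<Longrightarrow> \<exists>a b c. xs = [a,b,c]"
  by (auto simp: length_Suc_conv numeral_eq_Suc)
lemma len4: "length xs = 4 \<Longrightarrow> \<exists>a b c d. xs = [a,b,c,d]"
  by (auto simp: length_Suc_conv numeral_eq_Suc)

lemma card1: "int (card {x::'a::finite. Q x}) = (\<Sum>x\<in>UNIV. of_bool (Q x))"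
  by simp

lemma card2: "int (card {(x::'a::finite, y::'b::finite). Q x y}) = (\<Sum>x\<in>UNIV. \<Sum>y\<in>UNIV. of_bool (Q x y))"
proof -
  have "(\<Sum>x\<in>UNIV. \<Sum>y\<in>UNIV. of_bool (Q x y)) = (\<Sum>(x,y)\<in>UNIV\<times>UNIV. (of_bool (Q x y)::int))"
    by (rule sum.cartesian_product)
  also have "\<dots> = (\<Sum>p\<in>UNIV. of_bool (p \<in> {(x,y). Q x y}))"
    by (simp add: UNIV_Times_UNIV case_prod_beta)
  also have "\<dots> = int (card {(x,y). Q x y})" by simp
  finally show ?thesis by simp
qed

lemma card3: "int (card {(x::'a::finite, y::'b::finite, z::'c::finite). Q x y z}) = (\<Sum>x\<in>UNIV. \<Sum>y\<in>UNIV. \<Sum>z\<in>UNIV. of_bool (Q x y z))"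
proof -
  have e: "{(x::'a, y::'b, z::'c). Q x y z} = {(x, p). Q x (fst p) (snd p)}" by auto
  have "int (card {(x, p). Q x (fst p) (snd p)}) = (\<Sum>x\<in>UNIV. \<Sum>p\<in>UNIV. of_bool (Q x (fst p) (snd p)))"
    by (rule card2)
  also have "\<dots> = (\<Sum>x\<in>UNIV. \<Sum>y\<in>UNIV. \<Sum>z\<in>UNIV. of_bool (Q x y z))"
  proof (rule sum.cong[OF refl])
    fix x
    have "(\<Sum>y\<in>UNIV. \<Sum>z\<in>UNIV. (of_bool (Q x y z)::int)) = (\<Sum>(y,z)\<in>UNIV\<times>UNIV. of_bool (Q x y z))"
      by (rule sum.cartesian_product)
    then show "(\<Sum>p\<in>UNIV. (of_bool (Q x (fst p) (snd p))::int)) = (\<Sum>y\<in>UNIV. \<Sum>z\<in>UNIV. of_bool (Q x y z))"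
      by (simp add: UNIV_Times_UNIV case_prod_beta)
  qed
  finally show ?thesis unfolding e .
qed

definition ind :: "(bit^'r) set \<Rightarrow> bit^'r \<Rightarrow> int" where
  "ind X x = of_bool (x \<in> X)"

lemma bv_eq_add_iff: "(a::bit^'r) = b + c \<longleftrightarrow> c = a + b"
  by (metis bv_add_cancel(2) add.commute)

lemma L2:
  assumes p: "p \<noteq> 0"
  shows "2 * int (nsub 2 X {p}) = (\<Sum>x\<in>UNIV. ind X x * ind X (x + p))"
proof -
  have e: "{xs. distinct xs \<and> set xs \<subseteq> X \<and> length xs = 2 \<and> sum_list xs \<in> {p}} = (\<lambda>x. [x,x+p]) ` {x. x\<in>X \<and> x+p\<in>X}"
  proof (intro equalityI subsetI)
    fix xs assume "xs \<in> {xs. distinct xs \<and> set xs \<subseteq> X \<and> length xs = 2 \<and> sum_list xs \<in> {p}}"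
    then have h: "distinct xs" "set xs \<subseteq> X" "length xs = 2" "sum_list xs = p" by auto
    then obtain a b where ab: "xs = [a,b]" using len2 by blast
    have "a + b = p" using h ab by simp
    then have "b = a + p" by (metis bv_add_cancel(2) add.assoc)
    then show "xs \<in> (\<lambda>x. [x,x+p]) ` {x. x\<in>X \<and> x+p\<in>X}" using h ab by auto
  next
    fix xs assume "xs \<in> (\<lambda>x. [x,x+p]) ` {x. x\<in>X \<and> x+p\<in>X}"
    then obtain x where x: "xs = [x, x+p]" "x \<in> X" "x + p \<in> X" by blast
    have "x \<noteq> x + p" using p by (metis add_0_right add_left_cancel)
    then show "xs \<in> {xs. distinct xs \<and> set xs \<subseteq> X \<and> length xs = 2 \<and> sum_list xs \<in> {p}}"
      using x by (simp add: add.assoc[symmetric])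
  qed
  have inj: "inj_on (\<lambda>x. [x,x+p]) {x. x\<in>X \<and> x+p\<in>X}" by (auto intro: inj_onI)
  have "fact 2 * nsub 2 X {p} = card {x. x\<in>X \<and> x+p\<in>X}"
    using link[of X 2 "{p}"] e card_image[OF inj] by simp
  then have "2 * int (nsub 2 X {p}) = int (card {x. x\<in>X \<and> x+p\<in>X})"
    by (simp add: numeral_2_eq_2)
  also have "\<dots> = (\<Sum>x\<in>UNIV. ind X x * ind X (x + p))"
    unfolding card1 ind_def by (simp add: Int_def)
  finally show ?thesis .
qed

lemma bv_two [simp]: "(2::bit^'r) * x = 0"
  by (simp add: vec_eq_iff)

lemma bv3: "(x::bit^'r) + y + z = x \<longleftrightarrow> y = z" "(x::bit^'r) + y + z = y \<longleftrightarrow> x = z"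
  "(x::bit^'r) + y + z = z \<longleftrightarrow> x = y"
proof -
  show "x + y + z = x \<longleftrightarrow> y = z" by (simp add: add.assoc bv_add_eq0)
  show "x + y + z = y \<longleftrightarrow> x = z" by (metis add.commute add.left_commute add_cancel_left_right bv_add_eq0)
  show "x + y + z = z \<longleftrightarrow> x = y" by (simp add: bv_add_eq0)
qed

lemma bv_sum3: "(a::bit^'r) + (b + c) = 0 \<Longrightarrow> c = a + b"
  by (metis add.assoc bv_add_eq0)

lemma bv_sum4: "(a::bit^'r) + (b + (c + d)) = 0 \<Longrightarrow> d = a + b + c"
  by (metis add.assoc bv_add_eq0)

lemma L3:
  assumes X0: "0 \<notin> X"
  shows "6 * int (nsub 3 X {0}) = (\<Sum>x\<in>UNIV. \<Sum>y\<in>UNIV. ind X x * ind X y * ind X (x + y))"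
proof -
  have e: "{xs. distinct xs \<and> set xs \<subseteq> X \<and> length xs = 3 \<and> sum_list xs \<in> {0}} = (\<lambda>(x,y). [x,y,x+y]) ` {(x,y). x\<in>X \<and> y\<in>X \<and> x+y\<in>X}"
  proof (intro equalityI subsetI)
    fix xs assume "xs \<in> {xs. distinct xs \<and> set xs \<subseteq> X \<and> length xs = 3 \<and> sum_list xs \<in> {0}}"
    then have h: "distinct xs" "set xs \<subseteq> X" "length xs = 3" "sum_list xs = 0" by auto
    then obtain a b c where ab: "xs = [a,b,c]" using len3 by blast
    have "a + (b + c) = 0" using h ab by simp
    then have "c = a + b" by (rule bv_sum3)
    then show "xs \<in> (\<lambda>(x,y). [x,y,x+y]) ` {(x,y). x\<in>X \<and> y\<in>X \<and> x+y\<in>X}" using h ab by auto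
  next
    fix xs assume "xs \<in> (\<lambda>(x,y). [x,y,x+y]) ` {(x,y). x\<in>X \<and> y\<in>X \<and> x+y\<in>X}"
    then obtain x y where x: "xs = [x, y, x+y]" "x \<in> X" "y \<in> X" "x + y \<in> X" by auto
    have "x \<noteq> y" using x X0 by auto
    moreover have "x \<noteq> x + y" using x X0 by (metis add_cancel_left_right)
    moreover have "y \<noteq> x + y" using x X0 by (metis add_cancel_right_left)
    ultimately show "xs \<in> {xs. distinct xs \<and> set xs \<subseteq> X \<and> length xs = 3 \<and> sum_list xs \<in> {0}}"
      using x by (simp add: add.assoc[symmetric])
  qed
  have inj: "inj_on (\<lambda>(x,y). [x,y,x+y]) {(x,y). x\<in>X \<and> y\<in>X \<and> x+y\<in>X}" by (auto intro: inj_onI)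
  have "fact 3 * nsub 3 X {0} = card {(x,y). x\<in>X \<and> y\<in>X \<and> x+y\<in>X}"
    using link[of X 3 "{0}"] e card_image[OF inj] by simp
  moreover have "(fact 3::nat) = 6" by (simp add: fact_numeral)
  ultimately have "6 * int (nsub 3 X {0}) = int (card {(x,y). x\<in>X \<and> y\<in>X \<and> x+y\<in>X})"
    by simp
  also have "\<dots> = (\<Sum>x\<in>UNIV. \<Sum>y\<in>UNIV. ind X x * ind X y * ind X (x + y))"
    unfolding card2 ind_def by (intro sum.cong refl) auto
  finally show ?thesis .
qed

lemma L4:
  assumes X0: "0 \<notin> X"
  shows "24 * int (nsub 4 X {0}) = (\<Sum>x\<in>UNIV. \<Sum>y\<in>UNIV. \<Sum>z\<in>UNIV.
     ind X x * ind X y * ind X z * ind X (x + y + z) * of_bool (x \<noteq> y \<and> x \<noteq> z \<and> y \<noteq> z))"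
proof -
  let ?A = "{(x,y,z). x\<in>X \<and> y\<in>X \<and> z\<in>X \<and> x+y+z\<in>X \<and> x \<noteq> y \<and> x \<noteq> z \<and> y \<noteq> z}"
  have e: "{xs. distinct xs \<and> set xs \<subseteq> X \<and> length xs = 4 \<and> sum_list xs \<in> {0}} = (\<lambda>(x,y,z). [x,y,z,x+y+z]) ` ?A"
  proof (intro equalityI subsetI)
    fix xs assume "xs \<in> {xs. distinct xs \<and> set xs \<subseteq> X \<and> length xs = 4 \<and> sum_list xs \<in> {0}}"
    then have h: "distinct xs" "set xs \<subseteq> X" "length xs = 4" "sum_list xs = 0" by auto
    then obtain a b c d where ab: "xs = [a,b,c,d]" using len4 by blast
    have "a + (b + (c + d)) = 0" using h ab by simp
    then have "d = a + b + c" by (rule bv_sum4)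
    moreover have "(a,b,c) \<in> ?A" using h ab \<open>d = a + b + c\<close> by auto
    then show "xs \<in> (\<lambda>(x,y,z). [x,y,z,x+y+z]) ` ?A"
      by (rule rev_image_eqI) (simp add: ab \<open>d = a + b + c\<close>)
  next
    fix xs assume "xs \<in> (\<lambda>(x,y,z). [x,y,z,x+y+z]) ` ?A"
    then obtain x y z where x: "xs = [x, y, z, x+y+z]" "(x,y,z) \<in> ?A" by auto
    then show "xs \<in> {xs. distinct xs \<and> set xs \<subseteq> X \<and> length xs = 4 \<and> sum_list xs \<in> {0}}"
      by (auto simp add: add.assoc[symmetric] bv3 bv_add_eq0)
  qed
  have inj: "inj_on (\<lambda>(x,y,z). [x,y,z,x+y+z]) ?A" by (auto intro: inj_onI)
  have "fact 4 * nsub 4 X {0} = card ?A"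
    using link[of X 4 "{0}"] e card_image[OF inj] by simp
  moreover have "(fact 4::nat) = 24" by (simp add: fact_numeral)
  ultimately have "24 * int (nsub 4 X {0}) = int (card ?A)"
    by simp
  also have "\<dots> = (\<Sum>x\<in>UNIV. \<Sum>y\<in>UNIV. \<Sum>z\<in>UNIV.
     ind X x * ind X y * ind X z * ind X (x + y + z) * of_bool (x \<noteq> y \<and> x \<noteq> z \<and> y \<noteq> z))"
    unfolding card3 ind_def by (intro sum.cong refl) auto
  finally show ?thesis .
qed



lemma sum_shift: "(\<Sum>y\<in>UNIV. h (a + y)) = (\<Sum>y\<in>UNIV. h (y::bit^'r))"
  by (rule sum.reindex_bij_witness[of _ "\<lambda>y. a + y" "\<lambda>y. a + y"]) auto

definition R :: "(bit^'r \<Rightarrow> int) \<Rightarrow> (bit^'r \<Rightarrow> int) \<Rightarrow> (bit^'r \<Rightarrow> int) \<Rightarrow> int" where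
  "R A B C = (\<Sum>x\<in>UNIV. \<Sum>y\<in>UNIV. A x * B y * C (x + y))"

definition P4 :: "(bit^'r \<Rightarrow> int) \<Rightarrow> (bit^'r \<Rightarrow> int) \<Rightarrow> (bit^'r \<Rightarrow> int) \<Rightarrow> (bit^'r \<Rightarrow> int) \<Rightarrow> int" where
  "P4 A B C D = (\<Sum>x\<in>UNIV. \<Sum>y\<in>UNIV. \<Sum>z\<in>UNIV. A x * B y * C z * D (x + y + z))"

lemma R12: "R A B C = R B A C"
  unfolding R_def by (subst sum.swap) (simp add: mult_ac add.commute)

lemma R23: "R A B C = R A C B"
  unfolding R_def
proof (rule sum.cong[OF refl])
  fix x
  have "(\<Sum>y\<in>UNIV. A x * B y * C (x + y)) = (\<Sum>y\<in>UNIV. A x * B (x + y) * C (x + (x + y)))"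
    by (rule sum_shift[symmetric])
  then show "(\<Sum>y\<in>UNIV. A x * B y * C (x + y)) = (\<Sum>y\<in>UNIV. A x * C y * B (x + y))"
    by (simp add: mult_ac)
qed

lemma P12: "P4 A B C D = P4 B A C D"
  unfolding P4_def by (subst sum.swap) (simp add: mult_ac add.commute)

lemma P23: "P4 A B C D = P4 A C B D"
  unfolding P4_def
proof (rule sum.cong[OF refl])
  fix x
  show "(\<Sum>y\<in>UNIV. \<Sum>z\<in>UNIV. A x * B y * C z * D (x + y + z)) = (\<Sum>y\<in>UNIV. \<Sum>z\<in>UNIV. A x * C y * B z * D (x + y + z))"
    by (subst sum.swap) (simp add: mult_ac add_ac)
qed

lemma P34: "P4 A B C D = P4 A B D C"
  unfolding P4_def
proof (rule sum.cong[OF refl], rule sum.cong[OF refl])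
  fix x y
  have "(\<Sum>z\<in>UNIV. A x * B y * C z * D (x + y + z)) = (\<Sum>z\<in>UNIV. A x * B y * C (x + y + z) * D (x + y + (x + y + z)))"
    by (rule sum_shift[symmetric])
  then show "(\<Sum>z\<in>UNIV. A x * B y * C z * D (x + y + z)) = (\<Sum>z\<in>UNIV. A x * B y * D z * C (x + y + z))"
    by (simp only: bv_add_cancel(2)) (simp add: mult_ac)
qed

lemma R_diff:
  "R (\<lambda>x. A x - A' x) B C = R A B C - R A' B C"
  "R A (\<lambda>x. B x - B' x) C = R A B C - R A B' C"
  "R A B (\<lambda>x. C x - C' x) = R A B C - R A B C'"
  unfolding R_def by (simp_all add: algebra_simps sum_subtractf)

lemma P_diff:
  "P4 (\<lambda>x. A x - A' x) B C D = P4 A B C D - P4 A' B C D"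
  "P4 A (\<lambda>x. B x - B' x) C D = P4 A B C D - P4 A B' C D"
  "P4 A B (\<lambda>x. C x - C' x) D = P4 A B C D - P4 A B C' D"
  "P4 A B C (\<lambda>x. D x - D' x) = P4 A B C D - P4 A B C D'"
  unfolding P4_def by (simp_all add: algebra_simps sum_subtractf)



lemma bv_aba [simp]: "(x::bit^'r) + y + x = y"
  by (metis add.commute bv_add_cancel(2) add.assoc)

lemma ind01 [simp]: "ind X x * ind X x = ind X x"
  by (simp add: ind_def)

lemma sum_ind: "(\<Sum>x\<in>UNIV. ind X x) = int (card X)"
  by (simp add: ind_def)

lemma sum_delta_int: "(\<Sum>y\<in>UNIV. of_bool (y = (a::'a::finite)) * (h y :: int)) = h a"
proof -
  have "\<And>y. of_bool (y = a) * h y = (if a = y then h y else 0)" by auto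
  then show ?thesis by (simp add: sum.delta')
qed

lemma E0: "(\<Sum>z\<in>UNIV. ind Delta z * ind Delta (c + z)) = int CARD(bit^'r) - 2 + of_bool (c = (0::bit^'r))"
proof -
  have "\<And>z. ind Delta z * ind Delta (c + z) = 1 - of_bool (z = 0) - of_bool (z = c) + of_bool (z = 0) * of_bool (0 = c)"
    by (auto simp: ind_def Delta_def bv_add_eq0 eq_commute[of _ c])
  then have "(\<Sum>z\<in>UNIV. ind Delta z * ind Delta (c + z)) = (\<Sum>z\<in>UNIV. 1 - of_bool (z = 0) - of_bool (z = c) + of_bool (z = 0) * of_bool (0 = c))"
    by simp
  also have "\<dots> = int CARD(bit^'r) - 2 + of_bool (c = 0)"
    by (simp add: sum.distrib sum_subtractf of_bool_def eq_commute[of 0 c])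
  finally show ?thesis .
qed

lemma ind_Delta_add: "ind Delta (x + y) = 1 - of_bool (x = (y::bit^'r))"
  by (simp add: ind_def Delta_def bv_add_eq0)

lemma ind_Delta_add2: "ind Delta (a + z) = 1 - of_bool (z = (a::bit^'r))"
  by (auto simp add: ind_def Delta_def bv_add_eq0)

lemma ind_S0: "S \<subseteq> Delta \<Longrightarrow> ind S x * of_bool (x = 0) = 0"
  by (auto simp: ind_def Delta_def)

lemma ind_SD: "S \<subseteq> Delta \<Longrightarrow> ind S x * ind Delta x = ind S x"
  by (auto simp: ind_def Delta_def)

lemma sum_sq: "(\<Sum>x\<in>UNIV. \<Sum>y\<in>UNIV. ind S x * ind S (y::bit^'r)) = int (card S) ^ 2"
  by (simp add: sum_product[symmetric] sum_ind power2_eq_square)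

lemma sum_diag: "(\<Sum>x\<in>UNIV. \<Sum>y\<in>UNIV. ind S x * ind S (y::bit^'r) * of_bool (x = y)) = int (card S)"
proof -
  have "(\<Sum>x\<in>UNIV. \<Sum>y\<in>UNIV. ind S x * ind S (y::bit^'r) * of_bool (x = y)) = (\<Sum>x\<in>UNIV. \<Sum>y\<in>UNIV. of_bool (y = x) * (ind S x * ind S y))"
    by (simp add: mult_ac eq_commute)
  also have "\<dots> = (\<Sum>x\<in>UNIV. ind S x)" by (simp only: sum_delta_int ind01)
  finally show ?thesis by (simp add: sum_ind)
qed

lemma Rfdd: fixes S :: "(bit^'r) set" assumes "S \<subseteq> Delta"
  shows "R (ind S) (ind Delta) (ind Delta) = int (card S) * (int CARD(bit^'r) - 2)"
proof -
  have "R (ind S) (ind Delta) (ind Delta) = (\<Sum>x\<in>UNIV. ind S x * (\<Sum>y\<in>UNIV. ind Delta y * ind Delta (x + y)))"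
    unfolding R_def by (simp add: sum_distrib_left mult.assoc)
  also have "\<dots> = (\<Sum>x\<in>UNIV. ind S x * (int CARD(bit^'r) - 2 + of_bool (x = 0)))"
    by (simp add: E0)
  also have "\<dots> = (\<Sum>x\<in>UNIV. ind S x * (int CARD(bit^'r) - 2))"
    by (simp only: distrib_left ind_S0[OF assms] add_0_right)
  also have "\<dots> = int (card S) * (int CARD(bit^'r) - 2)"
    by (simp add: sum_distrib_right[symmetric] sum_ind)
  finally show ?thesis .
qed

lemma Rffd: fixes S :: "(bit^'r) set" shows "R (ind S) (ind S) (ind Delta) = int (card S) ^ 2 - int (card S)"
proof -
  have "R (ind S) (ind S) (ind Delta) = (\<Sum>x\<in>UNIV. \<Sum>y\<in>UNIV. ind S x * ind S y - ind S x * ind S y * of_bool (x = y))"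
    unfolding R_def ind_Delta_add by (simp add: algebra_simps)
  also have "\<dots> = int (card S) ^ 2 - int (card S)"
    by (simp only: sum_subtractf sum_sq sum_diag)
  finally show ?thesis .
qed

lemma P4fddd: fixes S :: "(bit^'r) set" assumes "S \<subseteq> Delta"
  shows "P4 (ind S) (ind Delta) (ind Delta) (ind Delta) = int (card S) * ((int CARD(bit^'r) - 2) * (int CARD(bit^'r) - 1) + 1)"
proof -
  have inner: "(\<Sum>y\<in>UNIV. ind Delta y * (\<Sum>z\<in>UNIV. ind Delta z * ind Delta (x + y + z))) = (int CARD(bit^'r) - 2) * (int CARD(bit^'r) - 1) + ind Delta x" for x :: "bit^'r"
  proof -
    have "(\<Sum>y\<in>UNIV. ind Delta y * (\<Sum>z\<in>UNIV. ind Delta z * ind Delta (x + y + z))) = (\<Sum>y\<in>UNIV. ind Delta y * (int CARD(bit^'r) - 2) + of_bool (y = x) * ind Delta y)"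
      by (rule sum.cong[OF refl], simp only: E0 bv_add_eq0) (simp add: algebra_simps eq_commute)
    also have "\<dots> = (\<Sum>y\<in>UNIV. ind Delta (y::bit^'r)) * (int CARD(bit^'r) - 2) + ind Delta x"
      by (simp only: sum.distrib sum_delta_int sum_distrib_right)
    also have "(\<Sum>y\<in>UNIV. ind Delta (y::bit^'r)) = int CARD(bit^'r) - 1"
      by (simp add: sum_ind Delta_def card_Diff_subset)
    finally show ?thesis by (simp add: mult.commute)
  qed
  have "P4 (ind S) (ind Delta) (ind Delta) (ind Delta) = (\<Sum>x\<in>UNIV. ind S x * (\<Sum>y\<in>UNIV. ind Delta y * (\<Sum>z\<in>UNIV. ind Delta z * ind Delta (x + y + z))))"
    unfolding P4_def by (simp add: sum_distrib_left mult.assoc)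
  also have "\<dots> = (\<Sum>x\<in>UNIV. ind S x * ((int CARD(bit^'r) - 2) * (int CARD(bit^'r) - 1) + 1))"
    by (simp only: inner distrib_left ind_SD[OF assms] mult_1_right)
  also have "\<dots> = int (card S) * ((int CARD(bit^'r) - 2) * (int CARD(bit^'r) - 1) + 1)"
    by (simp add: sum_distrib_right[symmetric] sum_ind)
  finally show ?thesis .
qed

lemma P4ffdd: fixes S :: "(bit^'r) set" assumes "S \<subseteq> Delta"
  shows "P4 (ind S) (ind S) (ind Delta) (ind Delta) = int (card S) ^ 2 * (int CARD(bit^'r) - 2) + int (card S)"
proof -
  have "P4 (ind S) (ind S) (ind Delta) (ind Delta) = (\<Sum>x\<in>UNIV. \<Sum>y\<in>UNIV. ind S x * ind S y * (\<Sum>z\<in>UNIV. ind Delta z * ind Delta (x + y + z)))"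
    unfolding P4_def by (simp add: sum_distrib_left mult.assoc)
  also have "\<dots> = (\<Sum>x\<in>UNIV. \<Sum>y\<in>UNIV. ind S x * ind S y * (int CARD(bit^'r) - 2) + ind S x * ind S y * of_bool (x = y))"
    by (simp only: E0 bv_add_eq0) (simp add: algebra_simps)
  also have "\<dots> = int (card S) ^ 2 * (int CARD(bit^'r) - 2) + int (card S)"
    by (simp only: sum.distrib sum_diag sum_distrib_right[symmetric] sum_sq)
  finally show ?thesis .
qed

lemma P4fffd: fixes S :: "(bit^'r) set" shows "P4 (ind S) (ind S) (ind S) (ind Delta) = int (card S) ^ 3 - R (ind S) (ind S) (ind S)"
proof -
  have "P4 (ind S) (ind S) (ind S) (ind Delta) = (\<Sum>x\<in>UNIV. \<Sum>y\<in>UNIV. \<Sum>z\<in>UNIV. ind S x * ind S y * ind S z - of_bool (z = x + y) * (ind S x * ind S y * ind S z))"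
    unfolding P4_def ind_Delta_add2 by (simp add: algebra_simps)
  also have "\<dots> = (\<Sum>x\<in>UNIV. \<Sum>y\<in>UNIV. \<Sum>z\<in>UNIV. ind S x * ind S y * ind S z) - R (ind S) (ind S) (ind S)"
    unfolding R_def by (simp only: sum_subtractf sum_delta_int)
  also have "(\<Sum>x\<in>UNIV. \<Sum>y\<in>UNIV. \<Sum>z\<in>UNIV. ind S x * ind S y * ind S z) = int (card S) ^ 3"
    by (simp add: sum_distrib_left[symmetric] sum_distrib_right[symmetric] sum_ind power3_eq_cube)
  finally show ?thesis .
qed

lemma pw4: fixes S :: "(bit^'r) set"
  shows "ind S x * ind S y * ind S z * ind S (x + y + z) =
    ind S x * ind S y * ind S z * ind S (x + y + z) * of_bool (x \<noteq> y \<and> x \<noteq> z \<and> y \<noteq> z)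
    + of_bool (y = x) * (ind S x * ind S z)
    + of_bool (z = x) * (of_bool (x \<noteq> y) * (ind S x * ind S y))
    + of_bool (z = y) * (of_bool (x \<noteq> y) * (ind S x * ind S y))"
  by (cases "x = y"; cases "z = x"; cases "z = y") (auto simp: ind_def)

lemma sum_offdiag: fixes S :: "(bit^'r) set"
  shows "(\<Sum>x\<in>UNIV. \<Sum>y\<in>UNIV. of_bool (x \<noteq> y) * (ind S x * ind S y)) = int (card S) ^ 2 - int (card S)"
proof -
  have "(\<Sum>x\<in>UNIV. \<Sum>y\<in>UNIV. of_bool (x \<noteq> y) * (ind S x * ind S y)) = (\<Sum>x\<in>UNIV. \<Sum>y\<in>UNIV. ind S x * ind S y - ind S x * ind S y * of_bool (x = y))"
    by (intro sum.cong refl) auto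
  also have "\<dots> = int (card S) ^ 2 - int (card S)"
    by (simp only: sum_subtractf sum_sq sum_diag)
  finally show ?thesis .
qed

lemma deg4: fixes S :: "(bit^'r) set"
  shows "(\<Sum>x\<in>UNIV. \<Sum>y\<in>UNIV. \<Sum>z\<in>UNIV.
     ind S x * ind S y * ind S z * ind S (x + y + z) * of_bool (x \<noteq> y \<and> x \<noteq> z \<and> y \<noteq> z))
   = P4 (ind S) (ind S) (ind S) (ind S) - (3 * int (card S) ^ 2 - 2 * int (card S))"
proof -
  let ?D = "\<lambda>x y z. ind S x * ind S y * ind S z * ind S (x + y + z) * of_bool (x \<noteq> y \<and> x \<noteq> z \<and> y \<noteq> z)"
  have t1: "(\<Sum>x\<in>UNIV. \<Sum>y\<in>UNIV. \<Sum>z\<in>UNIV. of_bool (y = x) * (ind S x * ind S z)) = int (card S) ^ 2"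
  proof -
    have "(\<Sum>x\<in>UNIV. \<Sum>y\<in>UNIV. \<Sum>z\<in>UNIV. of_bool (y = x) * (ind S x * ind S z))
       = (\<Sum>x\<in>UNIV. \<Sum>y\<in>UNIV. of_bool (y = x) * (\<Sum>z\<in>UNIV. ind S x * ind S z))"
      by (simp only: sum_distrib_left)
    also have "\<dots> = (\<Sum>x\<in>UNIV. \<Sum>z\<in>UNIV. ind S x * ind S z)"
      by (simp only: sum_delta_int)
    finally show ?thesis by (simp only: sum_sq)
  qed
  have t2: "(\<Sum>x\<in>UNIV. \<Sum>y\<in>UNIV. \<Sum>z\<in>UNIV. of_bool (z = x) * (of_bool (x \<noteq> y) * (ind S x * ind S y))) = int (card S) ^ 2 - int (card S)"
    by (simp only: sum_delta_int sum_offdiag)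
  have t3: "(\<Sum>x\<in>UNIV. \<Sum>y\<in>UNIV. \<Sum>z\<in>UNIV. of_bool (z = y) * (of_bool (x \<noteq> y) * (ind S x * ind S y))) = int (card S) ^ 2 - int (card S)"
    by (simp only: sum_delta_int sum_offdiag)
  have "P4 (ind S) (ind S) (ind S) (ind S) = (\<Sum>x\<in>UNIV. \<Sum>y\<in>UNIV. \<Sum>z\<in>UNIV. ?D x y z
    + of_bool (y = x) * (ind S x * ind S z)
    + of_bool (z = x) * (of_bool (x \<noteq> y) * (ind S x * ind S y))
    + of_bool (z = y) * (of_bool (x \<noteq> y) * (ind S x * ind S y)))"
    unfolding P4_def by (intro sum.cong refl pw4)
  also have "\<dots> = (\<Sum>x\<in>UNIV. \<Sum>y\<in>UNIV. \<Sum>z\<in>UNIV. ?D x y z) + int (card S) ^ 2 + (int (card S) ^ 2 - int (card S)) + (int (card S) ^ 2 - int (card S))"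
    by (simp only: sum.distrib t1 t2 t3)
  finally show ?thesis by linarith
qed

lemma ind_diff: "S \<subseteq> Delta \<Longrightarrow> ind (Delta - S) = (\<lambda>x. ind Delta x - ind S x)"
  by (auto simp: ind_def fun_eq_iff)

lemma Rgggg: fixes S :: "(bit^'r) set" assumes S: "S \<subseteq> Delta"
  shows "R (ind (Delta - S)) (ind (Delta - S)) (ind (Delta - S)) =
    R (ind (Delta::(bit^'r) set)) (ind Delta) (ind Delta) - 3 * (int (card S) * (int CARD(bit^'r) - 2))
    + 3 * (int (card S) ^ 2 - int (card S)) - R (ind S) (ind S) (ind S)"
proof -
  let ?d = "ind (Delta::(bit^'r) set)" and ?f = "ind S"
  have "R (ind (Delta - S)) (ind (Delta - S)) (ind (Delta - S)) =
     R ?d ?d ?d - R ?d ?d ?f - R ?d ?f ?d + R ?d ?f ?f - R ?f ?d ?d + R ?f ?d ?f + R ?f ?f ?d - R ?f ?f ?f"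
    unfolding ind_diff[OF S] R_diff by (simp add: algebra_simps)
  moreover have "R ?d ?d ?f = R ?f ?d ?d" by (metis R12 R23)
  moreover have "R ?d ?f ?d = R ?f ?d ?d" by (rule R12)
  moreover have "R ?d ?f ?f = R ?f ?f ?d" by (metis R12 R23)
  moreover have "R ?f ?d ?f = R ?f ?f ?d" by (rule R23)
  ultimately show ?thesis using Rfdd[OF S] Rffd[of S] by simp
qed

lemma Pgggg: fixes S :: "(bit^'r) set" assumes S: "S \<subseteq> Delta"
  shows "P4 (ind (Delta - S)) (ind (Delta - S)) (ind (Delta - S)) (ind (Delta - S)) =
    P4 (ind (Delta::(bit^'r) set)) (ind Delta) (ind Delta) (ind Delta)
    - 4 * (int (card S) * ((int CARD(bit^'r) - 2) * (int CARD(bit^'r) - 1) + 1))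
    + 6 * (int (card S) ^ 2 * (int CARD(bit^'r) - 2) + int (card S))
    - 4 * (int (card S) ^ 3 - R (ind S) (ind S) (ind S))
    + P4 (ind S) (ind S) (ind S) (ind S)"
proof -
  let ?d = "ind (Delta::(bit^'r) set)" and ?f = "ind S"
  have e: "P4 (ind (Delta - S)) (ind (Delta - S)) (ind (Delta - S)) (ind (Delta - S)) =
     P4 ?d ?d ?d ?d
     - P4 ?f ?d ?d ?d - P4 ?d ?f ?d ?d - P4 ?d ?d ?f ?d - P4 ?d ?d ?d ?f
     + P4 ?f ?f ?d ?d + P4 ?f ?d ?f ?d + P4 ?f ?d ?d ?f + P4 ?d ?f ?f ?d + P4 ?d ?f ?d ?f + P4 ?d ?d ?f ?f
     - P4 ?f ?f ?f ?d - P4 ?f ?f ?d ?f - P4 ?f ?d ?f ?f - P4 ?d ?f ?f ?f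
     + P4 ?f ?f ?f ?f"
    unfolding ind_diff[OF S] P_diff by (simp add: algebra_simps)
  have s1: "P4 ?d ?f ?d ?d = P4 ?f ?d ?d ?d" by (rule P12)
  have s2: "P4 ?d ?d ?f ?d = P4 ?f ?d ?d ?d" using P23[of ?d ?d ?f ?d] s1 by simp
  have s3: "P4 ?d ?d ?d ?f = P4 ?f ?d ?d ?d" using P34[of ?d ?d ?d ?f] s2 by simp
  have t1: "P4 ?f ?d ?f ?d = P4 ?f ?f ?d ?d" by (rule P23)
  have t2: "P4 ?f ?d ?d ?f = P4 ?f ?f ?d ?d" using P34[of ?f ?d ?d ?f] t1 by simp
  have t3: "P4 ?d ?f ?f ?d = P4 ?f ?f ?d ?d" using P12[of ?d ?f ?f ?d] t1 by simp
  have t4: "P4 ?d ?f ?d ?f = P4 ?f ?f ?d ?d" using P12[of ?d ?f ?d ?f] t2 by simp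
  have t5: "P4 ?d ?d ?f ?f = P4 ?f ?f ?d ?d" using P23[of ?d ?d ?f ?f] t4 by simp
  have u1: "P4 ?f ?f ?d ?f = P4 ?f ?f ?f ?d" by (rule P34)
  have u2: "P4 ?f ?d ?f ?f = P4 ?f ?f ?f ?d" using P23[of ?f ?d ?f ?f] u1 by simp
  have u3: "P4 ?d ?f ?f ?f = P4 ?f ?f ?f ?d" using P12[of ?d ?f ?f ?f] u2 by simp
  show ?thesis unfolding e s1 s2 s3 t1 t2 t3 t4 t5 u1 u2 u3 P4fddd[OF S] P4ffdd[OF S] P4fffd
    by simp
qed

lemma card_Delta_diff: fixes S :: "(bit^'r) set" assumes "S \<subseteq> Delta"
  shows "int (card (Delta - S)) = int CARD(bit^'r) - 1 - int (card S)"
proof -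
  have "card (Delta::(bit^'r) set) = CARD(bit^'r) - 1" by (simp add: Delta_def card_Diff_subset)
  moreover have "CARD(bit^'r) \<ge> 1" by (simp add: Suc_le_eq)
  moreover have "card (Delta - S) = card (Delta::(bit^'r) set) - card S" using assms by (simp add: card_Diff_subset finite_subset)
  moreover have "card S \<le> card (Delta::(bit^'r) set)" using assms by (simp add: card_mono)
  ultimately show ?thesis by linarith
qed

lemma keyA: fixes S :: "(bit^'r) set" assumes S: "S \<subseteq> Delta"
  shows "6 * (int (nsub 3 S {0}) + int (nsub 3 (Delta - S) {0})) =
    R (ind (Delta::(bit^'r) set)) (ind Delta) (ind Delta) - 3 * (int (card S) * (int CARD(bit^'r) - 2))
    + 3 * (int (card S) ^ 2 - int (card S))"
proof -
  have "0 \<notin> S" "0 \<notin> Delta - S" using S by (auto simp: Delta_def)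
  from L3[OF this(1)] L3[OF this(2)] Rgggg[OF S] show ?thesis by (simp add: R_def)
qed

lemma keyB: fixes S :: "(bit^'r) set" assumes S: "S \<subseteq> Delta"
  shows "24 * (int (nsub 4 S {0}) - int (nsub 3 (Delta - S) {0}) - int (nsub 4 (Delta - S) {0})) =
    - 3 * int (card S) ^ 2 + 2 * int (card S) - P4 (ind (Delta::(bit^'r) set)) (ind Delta) (ind Delta) (ind Delta)
    + 4 * (int (card S) * ((int CARD(bit^'r) - 2) * (int CARD(bit^'r) - 1) + 1))
    - 6 * (int (card S) ^ 2 * (int CARD(bit^'r) - 2) + int (card S))
    + 4 * int (card S) ^ 3
    + 3 * (int CARD(bit^'r) - 1 - int (card S)) ^ 2 - 2 * (int CARD(bit^'r) - 1 - int (card S))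
    - 4 * R (ind (Delta::(bit^'r) set)) (ind Delta) (ind Delta)
    + 12 * (int (card S) * (int CARD(bit^'r) - 2)) - 12 * (int (card S) ^ 2 - int (card S))"
proof -
  have z: "0 \<notin> S" "0 \<notin> Delta - S" using S by (auto simp: Delta_def)
  have a: "24 * int (nsub 4 S {0}) = P4 (ind S) (ind S) (ind S) (ind S) - (3 * int (card S) ^ 2 - 2 * int (card S))"
    using L4[OF z(1)] deg4[of S] by simp
  have b: "24 * int (nsub 4 (Delta - S) {0}) = P4 (ind (Delta - S)) (ind (Delta - S)) (ind (Delta - S)) (ind (Delta - S))
     - (3 * int (card (Delta - S)) ^ 2 - 2 * int (card (Delta - S)))"
    using L4[OF z(2)] deg4[of "Delta - S"] by simp
  have c: "6 * int (nsub 3 (Delta - S) {0}) = R (ind (Delta - S)) (ind (Delta - S)) (ind (Delta - S))"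
    using L3[OF z(2)] by (simp add: R_def)
  show ?thesis using a b c Pgggg[OF S] Rgggg[OF S] card_Delta_diff[OF S]
    by (simp add: algebra_simps)
qed

lemma keyC: fixes U T Z :: "(bit^'r) set"
  assumes p: "p \<noteq> 0" and Zc: "\<And>z. z \<in> Z \<Longrightarrow> z + p \<in> Z"
    and d1: "U \<inter> Z = {}" and d2: "T \<inter> Z = {}" and d3: "U \<inter> T = {}" and un: "U \<union> T \<union> Z = UNIV"
  shows "2 * (int (nsub 2 U {p}) - int (nsub 2 T {p})) = int (card Z) - int CARD(bit^'r) + 2 * int (card U)"
proof -
  have Zc': "x \<in> Z \<longleftrightarrow> x + p \<in> Z" for x
    using Zc[of x] Zc[of "x + p"] by auto
  have pw: "ind U x * ind U (x + p) = ind T x * ind T (x + p) + 1 - ind T x - ind T (x + p) - ind Z x" for x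
  proof (cases "x \<in> Z")
    case True
    then have "x + p \<in> Z" using Zc' by blast
    then show ?thesis using True d1 d2 by (auto simp: ind_def)
  next
    case False
    then have "x + p \<notin> Z" using Zc' by blast
    then show ?thesis using False d1 d2 d3 un by (auto simp: ind_def)
  qed
  have sh: "(\<Sum>x\<in>UNIV. ind T (x + p)) = int (card T)"
    using sum_shift[of "ind T" p] by (simp add: add.commute sum_ind)
  have "(\<Sum>x\<in>UNIV. ind U x * ind U (x + p)) = (\<Sum>x\<in>UNIV. ind T x * ind T (x + p)) + int CARD(bit^'r) - int (card T) - int (card T) - int (card Z)"
    by (simp add: pw sum.distrib sum_subtractf sh sum_ind)
  moreover have "card U + card T + card Z = CARD(bit^'r)"
  proof -
    have "card (U \<union> T \<union> Z) = card U + card T + card Z"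
      using d1 d2 d3 by (simp add: card_Un_disjoint Int_Un_distrib2)
    then show ?thesis using un by simp
  qed
  then have "int (card U) + int (card T) + int (card Z) = int CARD(bit^'r)"
    by (metis of_nat_add)
  moreover note L2[OF p, of U] L2[OF p, of T]
  ultimately show ?thesis by (simp add: algebra_simps)
qed

lemma bv_bab [simp]: "(y::bit^'r) + (x + y) = x"
  by (metis add.commute bv_add_cancel(2))

lemma nsub_split: assumes "P \<inter> Q = {}"
  shows "nsub m (X::(bit^'r) set) (P \<union> Q) = nsub m X P + nsub m X Q"
proof -
  have "{Y. Y \<subseteq> X \<and> card Y = m \<and> sum id Y \<in> P \<union> Q} =
     {Y. Y \<subseteq> X \<and> card Y = m \<and> sum id Y \<in> P} \<union> {Y. Y \<subseteq> X \<and> card Y = m \<and> sum id Y \<in> Q}" by blast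
  moreover have "card ({Y. Y \<subseteq> X \<and> card Y = m \<and> sum id Y \<in> P} \<union> {Y. Y \<subseteq> X \<and> card Y = m \<and> sum id Y \<in> Q})
     = card {Y. Y \<subseteq> X \<and> card Y = m \<and> sum id Y \<in> P} + card {Y. Y \<subseteq> X \<and> card Y = m \<and> sum id Y \<in> Q}"
    by (rule card_Un_disjoint) (use assms in auto)
  ultimately show ?thesis unfolding nsub_def by simp
qed

lemma cpart: fixes U T :: "(bit^'r) set"
  assumes a0: "a \<noteq> 0" and c0: "c \<noteq> 0" and ac: "a \<noteq> c" and aU: "a \<notin> U" and cU: "c \<notin> U"
    and acU: "a + c \<notin> U" and U0: "0 \<notin> U" and T: "T = Delta - insert c U - {a, a + c}"
  shows "2 * (int (nsub 2 U {a, a + c}) - int (nsub 2 T {a, a + c})) = 2 * (4 - int CARD(bit^'r) + 2 * int (card U))"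
proof -
  let ?Z = "{0, a, c, a + c}"
  have ne: "a + c \<noteq> 0" "a + c \<noteq> a" "a + c \<noteq> c" using a0 c0 ac bv_add_eq0 
    by (auto simp: add_cancel_left_right add_cancel_right_left)
  have cZ: "card ?Z = 4" using a0 c0 ac ne by auto
  have d1: "U \<inter> ?Z = {}" using aU cU acU U0 by auto
  have d2: "T \<inter> ?Z = {}" using T by (auto simp: Delta_def)
  have d3: "U \<inter> T = {}" using T by auto
  have un: "U \<union> T \<union> ?Z = UNIV" using T by (auto simp: Delta_def)
  have k1: "2 * (int (nsub 2 U {a}) - int (nsub 2 T {a})) = int (card ?Z) - int CARD(bit^'r) + 2 * int (card U)"
    by (rule keyC[OF a0 _ d1 d2 d3 un]) (auto simp: add.commute)
  have k2: "2 * (int (nsub 2 U {a + c}) - int (nsub 2 T {a + c})) = int (card ?Z) - int CARD(bit^'r) + 2 * int (card U)"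
    by (rule keyC[OF ne(1) _ d1 d2 d3 un]) (auto simp: add.commute add.left_commute)
  have sp: "nsub 2 X {a, a + c} = nsub 2 X {a} + nsub 2 X {a + c}" for X
  proof -
    have "{a, a + c} = {a} \<union> {a + c}" by auto
    then show ?thesis using nsub_split[of "{a}" "{a+c}" 2 X] ne by simp
  qed
  show ?thesis using k1 k2 cZ unfolding sp by simp
qed

lemma card_img: assumes "inj_on b {1..n}" "A \<subseteq> {1..n}" shows "card (b ` A) = card A"
  using assms by (meson card_image inj_on_subset)

theorem theorem4:
  fixes n :: nat
  assumes "n \<ge> 4"
  shows "\<exists>c1 c2 c3 :: int. \<forall>b :: nat \<Rightarrow> bit ^ 'r. design n b \<longrightarrow>
    int (A1 n b 3) = c1 - int (AT 3 (Ttil n b))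
  \<and> int (A1 n b 4) = c2 + int (AT 3 (Ttil n b)) + int (AT 4 (Ttil n b))
  \<and> (vec.independent {b 1, b 2, b 3, b 4} \<and> card {b 1, b 2, b 3, b 4} = 4
       \<and> b 1 + b 2 \<notin> b ` {5..n} \<and> b 3 + b 4 \<notin> b ` {5..n}
     \<longrightarrow> int (A2 n b 2) = c3 + int (nsub 2 (T12 n b) {b 1, b 1 + b 2})
                             + int (nsub 2 (T34 n b) {b 3, b 3 + b 4}))"
proof (intro exI allI impI conjI)
  let ?N = "int CARD(bit^'r)"
  let ?s = "int n - 2"
  let ?RD = "R (ind (Delta::(bit^'r) set)) (ind Delta) (ind Delta)"
  let ?PD = "P4 (ind (Delta::(bit^'r) set)) (ind Delta) (ind Delta) (ind Delta)"
  let ?Ea = "?RD - 3 * (?s * (?N - 2)) + 3 * (?s ^ 2 - ?s)"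
  let ?Eb = "- 3 * ?s ^ 2 + 2 * ?s - ?PD
    + 4 * (?s * ((?N - 2) * (?N - 1) + 1))
    - 6 * (?s ^ 2 * (?N - 2) + ?s)
    + 4 * ?s ^ 3
    + 3 * (?N - 1 - ?s) ^ 2 - 2 * (?N - 1 - ?s)
    - 4 * ?RD
    + 12 * (?s * (?N - 2)) - 12 * (?s ^ 2 - ?s)"
  fix b :: "nat \<Rightarrow> bit ^ 'r"
  assume des: "design n b"
  define S where "S = b ` ({2} \<union> {4..n})"
  have inj: "inj_on b {1..n}" and bD: "\<And>i. i \<in> {1..n} \<Longrightarrow> b i \<in> Delta"
    using des unfolding design_def by auto
  have SD: "S \<subseteq> Delta" unfolding S_def using bD assms by auto
  have "card ({2::nat} \<union> {4..n}) = n - 2" using assms by simp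
  then have cS: "int (card S) = ?s" unfolding S_def using card_img[OF inj, of "{2} \<union> {4..n}"] assms by auto
  have TT: "Ttil n b = Delta - S" unfolding Ttil_def S_def ..
  have A1S: "A1 n b m = nsub m S {0}" for m unfolding A1_def S_def ..
  have ka: "6 * (int (A1 n b 3) + int (AT 3 (Ttil n b))) = ?Ea"
    using keyA[OF SD] unfolding A1S AT_def TT cS .
  then show "int (A1 n b 3) = ?Ea div 6 - int (AT 3 (Ttil n b))"
    by (metis add_diff_cancel_right' nonzero_mult_div_cancel_left zero_neq_numeral)
  have kb: "24 * (int (A1 n b 4) - int (AT 3 (Ttil n b)) - int (AT 4 (Ttil n b))) = ?Eb"
    using keyB[OF SD] unfolding A1S AT_def TT cS .
  then have "?Eb div 24 = int (A1 n b 4) - int (AT 3 (Ttil n b)) - int (AT 4 (Ttil n b))"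
    by (metis nonzero_mult_div_cancel_left zero_neq_numeral)
  then show "int (A1 n b 4) = ?Eb div 24 + int (AT 3 (Ttil n b)) + int (AT 4 (Ttil n b))"
    by linarith
  assume H: "vec.independent {b 1, b 2, b 3, b 4} \<and> card {b 1, b 2, b 3, b 4} = 4
       \<and> b 1 + b 2 \<notin> b ` {5..n} \<and> b 3 + b 4 \<notin> b ` {5..n}"
  have in1: "1 \<in> {1..n}" "2 \<in> {1..n}" "3 \<in> {1..n}" "4 \<in> {1..n}" using assms by auto
  have ne: "b i \<noteq> b j" if "i \<in> {1..n}" "j \<in> {1..n}" "i \<noteq> j" for i j
    using inj that by (meson inj_on_contraD)
  have nz: "b i \<noteq> 0" if "i \<in> {1..n}" for i using bD[OF that] by (simp add: Delta_def)
  have mem: "b i \<in> b ` A \<longleftrightarrow> i \<in> A" if "i \<in> {1..n}" "A \<subseteq> {1..n}" for i A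
    using inj_on_image_mem_iff[OF inj that] .
  let ?B = "{b 1, b 2, b 3, b 4}"
  have i12: "b 1 + b 2 \<noteq> b 4"
  proof
    assume e: "b 1 + b 2 = b 4"
    have "b 1 \<in> ?B - {b 4}" "b 2 \<in> ?B - {b 4}" using ne in1 by auto
    then have "b 1 + b 2 \<in> vec.span (?B - {b 4})" by (intro vec.span_add vec.span_base)
    then have "vec.dependent ?B" unfolding vec.dependent_def e by blast
    then show False using H by blast
  qed
  have i34: "b 3 + b 4 \<noteq> b 2"
  proof
    assume e: "b 3 + b 4 = b 2"
    have "b 3 \<in> ?B - {b 2}" "b 4 \<in> ?B - {b 2}" using ne in1 by auto
    then have "b 3 + b 4 \<in> vec.span (?B - {b 2})" by (intro vec.span_add vec.span_base)
    then have "vec.dependent ?B" unfolding vec.dependent_def e by blast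
    then show False using H by blast
  qed
  let ?U = "b ` {4..n}"
  let ?U' = "b ` ({2} \<union> {5..n})"
  have U4: "?U = insert (b 4) (b ` {5..n})" 
  proof -
    have "{4..n} = insert 4 {5..n}" using assms by auto
    then show ?thesis by simp
  qed
  have SU: "S = insert (b 2) ?U" unfolding S_def by auto
  have SU': "S = insert (b 4) ?U'" unfolding S_def using U4 by auto
  have cU: "int (card ?U) = int n - 3" using card_img[OF inj, of "{4..n}"] assms by auto
  have cU': "int (card ?U') = int n - 3"
  proof -
    have "card ({2::nat} \<union> {5..n}) = n - 3" using assms by simp
    then show ?thesis using card_img[OF inj, of "{2} \<union> {5..n}"] assms by auto
  qed
  have c1: "2 * (int (nsub 2 ?U {b 1, b 1 + b 2}) - int (nsub 2 (T12 n b) {b 1, b 1 + b 2})) = 2 * (4 - ?N + 2 * int (card ?U))"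
  proof (rule cpart)
    show "b 1 \<noteq> 0" "b 2 \<noteq> 0" "b 1 \<noteq> b 2" using nz ne in1 by auto
    show "b 1 \<notin> ?U" "b 2 \<notin> ?U" using mem in1 assms by auto
    show "b 1 + b 2 \<notin> ?U" using U4 i12 H by auto
    show "0 \<notin> ?U" using SD SU by (auto simp: Delta_def)
    show "T12 n b = Delta - insert (b 2) ?U - {b 1, b 1 + b 2}" unfolding T12_def TT SU ..
  qed
  have c2: "2 * (int (nsub 2 ?U' {b 3, b 3 + b 4}) - int (nsub 2 (T34 n b) {b 3, b 3 + b 4})) = 2 * (4 - ?N + 2 * int (card ?U'))"
  proof (rule cpart)
    show "b 3 \<noteq> 0" "b 4 \<noteq> 0" "b 3 \<noteq> b 4" using nz ne in1 by auto
    show "b 3 \<notin> ?U'" using mem[of 3 "{2} \<union> {5..n}"] assms by auto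
    show "b 4 \<notin> ?U'" using mem[of 4 "{2} \<union> {5..n}"] assms by auto
    show "b 3 + b 4 \<notin> ?U'" using i34 H by auto
    show "0 \<notin> ?U'" using SD SU' by (auto simp: Delta_def)
    show "T34 n b = Delta - insert (b 4) ?U' - {b 3, b 3 + b 4}" unfolding T34_def TT SU' ..
  qed
  show "int (A2 n b 2) = 2 * (4 - ?N + 2 * (int n - 3)) + int (nsub 2 (T12 n b) {b 1, b 1 + b 2})
                             + int (nsub 2 (T34 n b) {b 3, b 3 + b 4})"
    using c1 c2 cU cU' unfolding A2_def A21_def A22_def by simp
qed


end
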